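(* Let $n\ge1$ and let $k_1\le k_2\le\cdots\le k_n$ be integers. Then $$\sum_{A} (-1)^{\#\{\text{special little triangles in }A\}}$$ over all arrowed Gelfand–Tsetlin patterns $A$ with bottom row $k_1,\ldots,k_n$ in which no entry is decorated with the double arrow $\nwarrow\nearrow$, equals the number of Gelfand–Tsetlin patterns with bottom row $k_1,\ldots,k_n$ in which every integer appears at most twice in each row, and whose entries each carry either no decoration or one decoration from $\{\nwarrow,\nearrow\}$, such that: (i) if an entry $a$ equals its $\nearrow$-neighbor then $a$ is not decorated with $\nearrow$, and if $a$ equals its $\nwarrow$-neighbor then $a$ is not decorated with $\nwarrow$; and (ii) whenever two entries in the same row are equal, at least one of them is decorated.
   Context: A Gelfand–Tsetlin pattern with $n$ rows is a triangular array of integers $(a_{i,j})_{1\le j\le i\le n}$, row $i$ being $a_{i,1},\ldots,a_{i,i}$, drawn so that $a_{i-1,j}$ sits between $a_{i,j}$ and $a_{i,j+1}$, satisfying $a_{i+1,j}\le a_{i,j}\le a_{i+1,j+1}$ for all $1\le j\le i<n$. Row $n$ is the bottom row. For an entry $a_{i,j}$: its $\nwarrow$-neighbor is $a_{i-1,j-1}$ and its $\nearrow$-neighbor is $a_{i-1,j}$ (when they exist), its $\swarrow$-neighbor is $a_{i+1,j}$ and its $\searrow$-neighbor is $a_{i+1,j+1}$, and its left/right neighbors are $a_{i,j-1}$, $a_{i,j+1}$. An arrowed Gelfand–Tsetlin pattern is a Gelfand–Tsetlin pattern in which each entry either carries no decoration or carries exactly one decoration from $\{\nwarrow,\nearrow,\nwarrow\nearrow\}$,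 subject to: if an entry $a$ equals its $\nearrow$-neighbor and is decorated with $\nearrow$ or $\nwarrow\nearrow$, then the entry to the right of $a$ in the same row also equals $a$ and is decorated with $\nwarrow$ or $\nwarrow\nearrow$; and if $a$ equals its $\nwarrow$-neighbor and is decorated with $\nwarrow$ or $\nwarrow\nearrow$, then the entry to the left of $a$ in the same row also equals $a$ and is decorated with $\nearrow$ or $\nwarrow\nearrow$. A special little triangle is an entry $a$ that equals both its $\swarrow$-neighbor $b$ and its $\searrow$-neighbor $c$, where $b$ is decorated with $\nearrow$ or $\nwarrow\nearrow$ and $c$ is decorated with $\nwarrow$ or $\nwarrow\nearrow$. *)

theory Defs
  imports Main
begin

datatype dec = NoDec | NW | NE | Both

(* A pattern with n rows is a function a :: nat => nat => int; entry a i j is meaningful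
   for 1 <= j <= i <= n (row i, position j); outside this range we normalize a i j = 0
   (and decorations to NoDec) so that patterns are unique representatives. *)
definition in_tri :: "nat \<Rightarrow> nat \<Rightarrow> nat \<Rightarrow> bool" where
  "in_tri n i j \<longleftrightarrow> 1 \<le> j \<and> j \<le> i \<and> i \<le> n"

definition gt_pattern :: "nat \<Rightarrow> (nat \<Rightarrow> int) \<Rightarrow> (nat \<Rightarrow> nat \<Rightarrow> int) \<Rightarrow> bool" where
  "gt_pattern n k a \<longleftrightarrow>
     (\<forall>i j. \<not> in_tri n i j \<longrightarrow> a i j = 0) \<and>
     (\<forall>j. 1 \<le> j \<and> j \<le> n \<longrightarrow> a n j = k j) \<and>
     (\<forall>i j. 1 \<le> j \<and> j \<le> i \<and> i < n \<longrightarrow> a (Suc i) j \<le> a i j \<and> a i j \<le> a (Suc i) (Suc j))"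

definition dec_normal :: "nat \<Rightarrow> (nat \<Rightarrow> nat \<Rightarrow> dec) \<Rightarrow> bool" where
  "dec_normal n d \<longleftrightarrow> (\<forall>i j. \<not> in_tri n i j \<longrightarrow> d i j = NoDec)"

definition has_ne :: "dec \<Rightarrow> bool" where
  "has_ne x \<longleftrightarrow> x = NE \<or> x = Both"

definition has_nw :: "dec \<Rightarrow> bool" where
  "has_nw x \<longleftrightarrow> x = NW \<or> x = Both"

(* The nearrow-neighbour of a_{i,j} is a_{i-1,j} (exists iff i >= 2 and j <= i-1);
   the nwarrow-neighbour is a_{i-1,j-1} (exists iff i >= 2 and j >= 2). *)
definition arrowed_cond :: "nat \<Rightarrow> (nat \<Rightarrow> nat \<Rightarrow> int) \<Rightarrow> (nat \<Rightarrow> nat \<Rightarrow> dec) \<Rightarrow> bool" where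
  "arrowed_cond n a d \<longleftrightarrow>
     (\<forall>i j. in_tri n i j \<and> 2 \<le> i \<and> j < i \<and> a i j = a (i - 1) j \<and> has_ne (d i j)
        \<longrightarrow> j + 1 \<le> i \<and> a i (j + 1) = a i j \<and> has_nw (d i (j + 1))) \<and>
     (\<forall>i j. in_tri n i j \<and> 2 \<le> i \<and> 2 \<le> j \<and> a i j = a (i - 1) (j - 1) \<and> has_nw (d i j)
        \<longrightarrow> 1 \<le> j - 1 \<and> a i (j - 1) = a i j \<and> has_ne (d i (j - 1)))"

definition arrowed_GT :: "nat \<Rightarrow> (nat \<Rightarrow> int) \<Rightarrow> ((nat \<Rightarrow> nat \<Rightarrow> int) \<times> (nat \<Rightarrow> nat \<Rightarrow> dec)) set" where
  "arrowed_GT n k = {(a, d). gt_pattern n k a \<and> dec_normal n d \<and> arrowed_cond n a d}"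

definition special_triangles :: "nat \<Rightarrow> (nat \<Rightarrow> nat \<Rightarrow> int) \<Rightarrow> (nat \<Rightarrow> nat \<Rightarrow> dec) \<Rightarrow> (nat \<times> nat) set" where
  "special_triangles n a d = {(i, j). in_tri n i j \<and> i < n \<and>
      a i j = a (Suc i) j \<and> a i j = a (Suc i) (Suc j) \<and>
      has_ne (d (Suc i) j) \<and> has_nw (d (Suc i) (Suc j))}"

definition no_double :: "nat \<Rightarrow> (nat \<Rightarrow> nat \<Rightarrow> dec) \<Rightarrow> bool" where
  "no_double n d \<longleftrightarrow> (\<forall>i j. in_tri n i j \<longrightarrow> d i j \<noteq> Both)"

definition rhs_patterns :: "nat \<Rightarrow> (nat \<Rightarrow> int) \<Rightarrow> ((nat \<Rightarrow> nat \<Rightarrow> int) \<times> (nat \<Rightarrow> nat \<Rightarrow> dec)) set" where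
  "rhs_patterns n k = {(a, d). gt_pattern n k a \<and> dec_normal n d \<and> no_double n d \<and>
     (\<forall>i x. 1 \<le> i \<and> i \<le> n \<longrightarrow> card {j. 1 \<le> j \<and> j \<le> i \<and> a i j = x} \<le> 2) \<and>
     (\<forall>i j. in_tri n i j \<and> 2 \<le> i \<and> j < i \<and> a i j = a (i - 1) j \<longrightarrow> d i j \<noteq> NE) \<and>
     (\<forall>i j. in_tri n i j \<and> 2 \<le> i \<and> 2 \<le> j \<and> a i j = a (i - 1) (j - 1) \<longrightarrow> d i j \<noteq> NW) \<and>
     (\<forall>i j j'. in_tri n i j \<and> in_tri n i j' \<and> j < j' \<and> a i j = a i j'
        \<longrightarrow> d i j \<noteq> NoDec \<or> d i j' \<noteq> NoDec)}"

end

theory Submission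
  imports Defs
begin

lemma interl:
  assumes "gt_pattern n k a" "2 \<le> i" "i \<le> n" "1 \<le> j" "j < i"
  shows "a i j \<le> a (i-1) j \<and> a (i-1) j \<le> a i (Suc j)"
proof -
  have "\<forall>i j. 1 \<le> j \<and> j \<le> i \<and> i < n \<longrightarrow> a (Suc i) j \<le> a i j \<and> a i j \<le> a (Suc i) (Suc j)"
    using assms(1) unfolding gt_pattern_def by blast
  then have "a (Suc (i-1)) j \<le> a (i-1) j \<and> a (i-1) j \<le> a (Suc (i-1)) (Suc j)"
  proof -
    have "1 \<le> j \<and> j \<le> i-1 \<and> i-1 < n" using assms by auto
    then show ?thesis using \<open>\<forall>i j. _\<close> by blast
  qed
  thus ?thesis using assms by simp
qed

lemma row_mono:
  assumes "gt_pattern n k a" "1 \<le> p" "p \<le> q" "q \<le> i" "i \<le> n"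
  shows "a i p \<le> a i q"
  using assms(3,4)
proof (induction q)
  case 0 then show ?case using assms by simp
next
  case (Suc q)
  show ?case
  proof (cases "p = Suc q")
    case True then show ?thesis by simp
  next
    case False
    then have "p \<le> q" using Suc by simp
    then have h1: "a i p \<le> a i q" using Suc by simp
    have "2 \<le> i" "1 \<le> q" "q < i" using Suc \<open>p \<le> q\<close> assms by auto
    then have "a i q \<le> a i (Suc q)" using interl[OF assms(1), of i q] assms by auto
    with h1 show ?thesis by simp
  qed
qed

lemma bounds:
  assumes "gt_pattern n k a"
  shows "m \<le> n \<Longrightarrow> 1 \<le> j \<Longrightarrow> j \<le> n - m \<Longrightarrow>
    Min (k ` {1..n}) \<le> a (n-m) j \<and> a (n-m) j \<le> Max (k ` {1..n})"
proof (induction m arbitrary: j)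
  case 0
  then have "a n j = k j" using assms unfolding gt_pattern_def by auto
  then show ?case using 0 by (auto intro: Min_le Max_ge)
next
  case (Suc m)
  have i: "n - Suc m < n" "Suc (n - Suc m) = n - m" using Suc by auto
  have "a (Suc (n - Suc m)) j \<le> a (n - Suc m) j \<and> a (n - Suc m) j \<le> a (Suc (n - Suc m)) (Suc j)"
  proof -
    have "\<forall>i j. 1 \<le> j \<and> j \<le> i \<and> i < n \<longrightarrow> a (Suc i) j \<le> a i j \<and> a i j \<le> a (Suc i) (Suc j)"
      using assms(1) unfolding gt_pattern_def by blast
    moreover have "1 \<le> j \<and> j \<le> n - Suc m \<and> n - Suc m < n" using Suc by auto
    ultimately show ?thesis by blast
  qed
  moreover have "Min (k ` {1..n}) \<le> a (n-m) j" using Suc by auto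
  moreover have "a (n-m) (Suc j) \<le> Max (k ` {1..n})" using Suc by auto
  ultimately show ?case using i by auto
qed

lemma dec_UNIV: "(UNIV::dec set) = {NoDec, NW, NE, Both}"
  using dec.exhaust by auto

lemma finite_S:
  "finite {(a, d). gt_pattern n k a \<and> dec_normal n d}"
proof -
  define lo where "lo = Min (k ` {1..n})"
  define hi where "hi = Max (k ` {1..n})"
  define TR where "TR = {(i,j). in_tri n i j}"
  have fTR: "finite TR" unfolding TR_def in_tri_def
    by (rule finite_subset[of _ "{..n} \<times> {..n}"]) auto
  have F1: "finite {f. \<forall>x. (x \<in> TR \<longrightarrow> f x \<in> {lo..hi}) \<and> (x \<notin> TR \<longrightarrow> f x = 0)}"
    by (rule finite_set_of_finite_funs) (auto simp: fTR)
  have F2: "finite {f. \<forall>x. (x \<in> TR \<longrightarrow> f x \<in> (UNIV::dec set)) \<and> (x \<notin> TR \<longrightarrow> f x = NoDec)}"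
    by (rule finite_set_of_finite_funs) (auto simp: fTR dec_UNIV)
  have A: "{a. gt_pattern n k a} \<subseteq> curry ` {f. \<forall>x. (x \<in> TR \<longrightarrow> f x \<in> {lo..hi}) \<and> (x \<notin> TR \<longrightarrow> f x = 0)}"
  proof
    fix a assume "a \<in> {a. gt_pattern n k a}"
    then have g: "gt_pattern n k a" by simp
    have "case_prod a \<in> {f. \<forall>x. (x \<in> TR \<longrightarrow> f x \<in> {lo..hi}) \<and> (x \<notin> TR \<longrightarrow> f x = 0)}"
    unfolding mem_Collect_eq
    proof (intro allI)
      fix x :: "nat \<times> nat"
      obtain i j where x: "x = (i,j)" by (cases x)
      have "((i, j) \<in> TR \<longrightarrow> lo \<le> a i j \<and> a i j \<le> hi) \<and> ((i, j) \<notin> TR \<longrightarrow> a i j = 0)"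
      proof (rule conjI; rule impI)
        assume "(i,j) \<in> TR"
        then have "in_tri n i j" unfolding TR_def by simp
        then have "n - i \<le> n" "1 \<le> j" "j \<le> n - (n - i)" "n - (n - i) = i" unfolding in_tri_def by auto
        then show "lo \<le> a i j \<and> a i j \<le> hi" using bounds[OF g, of "n-i" j] unfolding lo_def hi_def by auto
      next
        assume "(i,j) \<notin> TR"
        then show "a i j = 0" using g unfolding TR_def gt_pattern_def by auto
      qed
      then show "(x \<in> TR \<longrightarrow> case_prod a x \<in> {lo..hi}) \<and> (x \<notin> TR \<longrightarrow> case_prod a x = 0)"
        using x by simp
    qed
    then show "a \<in> curry ` {f. \<forall>x. (x \<in> TR \<longrightarrow> f x \<in> {lo..hi}) \<and> (x \<notin> TR \<longrightarrow> f x = 0)}"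
      by (intro image_eqI[where x="case_prod a"]) auto
  qed
  have D: "{d. dec_normal n d} \<subseteq> curry ` {f. \<forall>x. (x \<in> TR \<longrightarrow> f x \<in> (UNIV::dec set)) \<and> (x \<notin> TR \<longrightarrow> f x = NoDec)}"
  proof
    fix d assume "d \<in> {d. dec_normal n d}"
    then show "d \<in> curry ` {f. \<forall>x. (x \<in> TR \<longrightarrow> f x \<in> (UNIV::dec set)) \<and> (x \<notin> TR \<longrightarrow> f x = NoDec)}"
      by (intro image_eqI[where x="case_prod d"]) (auto simp: TR_def dec_normal_def)
  qed
  have "finite ({a. gt_pattern n k a} \<times> {d. dec_normal n d})"
    using finite_subset[OF A finite_imageI[OF F1]] finite_subset[OF D finite_imageI[OF F2]] by blast
  then show ?thesis by (rule finite_subset[rotated]) auto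
qed

definition pa :: "nat \<Rightarrow> (nat \<Rightarrow> nat \<Rightarrow> int) \<Rightarrow> nat \<Rightarrow> nat \<Rightarrow> bool" where
  "pa n a i j \<longleftrightarrow> 2 \<le> i \<and> i \<le> n \<and> 1 \<le> j \<and> Suc j \<le> i \<and> a i (Suc j) = a i j \<and>
     (j = 1 \<or> a i (j-1) \<noteq> a i j) \<and> (i < Suc (Suc j) \<or> a i (Suc (Suc j)) \<noteq> a i j)"

definition tsite :: "nat \<Rightarrow> (nat \<Rightarrow> nat \<Rightarrow> int) \<Rightarrow> nat \<Rightarrow> nat \<Rightarrow> bool" where
  "tsite n a i j \<longleftrightarrow> 3 \<le> i \<and> i \<le> n \<and> 1 \<le> j \<and> Suc (Suc j) \<le> i \<and> a i (Suc j) = a i j \<and>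
     a i (Suc (Suc j)) = a i j \<and>
     (j = 1 \<or> (a i (j-1) \<noteq> a i j \<and> a (i-1) (j-1) \<noteq> a i j)) \<and>
     (Suc (Suc j) = i \<or> (a i (Suc (Suc (Suc j))) \<noteq> a i j \<and> a (i-1) (Suc (Suc j)) \<noteq> a i j))"

definition pword :: "dec \<Rightarrow> dec \<Rightarrow> bool" where
  "pword x y \<longleftrightarrow> (x = NoDec \<and> y = NoDec) \<or> (x = NE \<and> y = NW)"

definition psite where
  "psite n a d i j \<longleftrightarrow> pa n a i j \<and> pword (d i j) (d i (Suc j))"

definition sites where
  "sites n a d = {(i,j). psite n a d i j \<or> tsite n a i j}"

definition tog2 :: "dec \<Rightarrow> dec \<Rightarrow> dec \<times> dec" where
  "tog2 x y = (if x = NoDec \<and> y = NoDec then (NE, NW) else if x = NE \<and> y = NW then (NoDec, NoDec) else (x, y))"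

definition tog3 :: "dec \<Rightarrow> dec \<Rightarrow> dec \<Rightarrow> dec \<times> dec \<times> dec" where
  "tog3 x y z = (
     if (x,y,z) = (NoDec,NoDec,NoDec) then (NE,NW,NoDec)
     else if (x,y,z) = (NE,NW,NoDec) then (NoDec,NoDec,NoDec)
     else if (x,y,z) = (NW,NoDec,NoDec) then (NW,NE,NW)
     else if (x,y,z) = (NW,NE,NW) then (NW,NoDec,NoDec)
     else if (x,y,z) = (NoDec,NoDec,NE) then (NE,NW,NE)
     else if (x,y,z) = (NE,NW,NE) then (NoDec,NoDec,NE)
     else if (x,y,z) = (NW,NoDec,NE) then (NoDec,NE,NW)
     else if (x,y,z) = (NoDec,NE,NW) then (NW,NoDec,NE)
     else (x,y,z))"

definition valid3 :: "dec \<Rightarrow> dec \<Rightarrow> dec \<Rightarrow> bool" where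
  "valid3 x y z \<longleftrightarrow> x \<noteq> Both \<and> y \<noteq> Both \<and> z \<noteq> Both \<and>
     (x = NE \<longrightarrow> y = NW) \<and> (y = NE \<longrightarrow> z = NW) \<and> (y = NW \<longrightarrow> x = NE) \<and> (z = NW \<longrightarrow> y = NE)"

lemma tog2_inv: "tog2 x y = (x', y') \<Longrightarrow> tog2 x' y' = (x, y)"
  by (cases x; cases y) (auto simp: tog2_def)

lemma tog2_pword: "pword x y \<Longrightarrow> tog2 x y = (x', y') \<Longrightarrow> pword x' y' \<and> ((x = NE) \<noteq> (x' = NE))
   \<and> x' \<noteq> NW \<and> y' \<noteq> NE \<and> (x' = NE \<longleftrightarrow> y' = NW)"
  by (cases x; cases y) (auto simp: tog2_def pword_def)

lemma tog3_inv: "tog3 x y z = (x', y', z') \<Longrightarrow> tog3 x' y' z' = (x, y, z)"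
  by (cases x; cases y; cases z) (auto simp: tog3_def)

lemma tog3_valid: "valid3 x y z \<Longrightarrow> tog3 x y z = (x', y', z') \<Longrightarrow> valid3 x' y' z' \<and>
   ((x = NE \<and> y = NW) \<or> (y = NE \<and> z = NW)) \<noteq> ((x' = NE \<and> y' = NW) \<or> (y' = NE \<and> z' = NW)) \<and>
   \<not> ((x = NE \<and> y = NW) \<and> (y = NE \<and> z = NW)) \<and> \<not> ((x' = NE \<and> y' = NW) \<and> (y' = NE \<and> z' = NW))"
  by (cases x; cases y; cases z) (auto simp: tog3_def valid3_def)

lemma valid3_E1: "valid3 x y z \<Longrightarrow> has_ne x \<Longrightarrow> x = NE \<and> y = NW"
  by (cases x; cases y; cases z) (simp_all add: valid3_def has_ne_def)
lemma valid3_E2: "valid3 x y z \<Longrightarrow> has_ne y \<Longrightarrow> y = NE \<and> z = NW"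
  by (cases x; cases y; cases z) (simp_all add: valid3_def has_ne_def)
lemma valid3_W2: "valid3 x y z \<Longrightarrow> has_nw y \<Longrightarrow> y = NW \<and> x = NE"
  by (cases x; cases y; cases z) (simp_all add: valid3_def has_nw_def)
lemma valid3_W3: "valid3 x y z \<Longrightarrow> has_nw z \<Longrightarrow> z = NW \<and> y = NE"
  by (cases x; cases y; cases z) (simp_all add: valid3_def has_nw_def)

definition flip where
  "flip n a d i j = (if tsite n a i j then
      (case tog3 (d i j) (d i (Suc j)) (d i (Suc (Suc j))) of (x, y, z) \<Rightarrow>
         d(i := (d i)(j := x, Suc j := y, Suc (Suc j) := z)))
    else (case tog2 (d i j) (d i (Suc j)) of (x, y) \<Rightarrow> d(i := (d i)(j := x, Suc j := y))))"

lemma flip_flip: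
  assumes "(i, j) \<in> sites n a d"
  shows "flip n a (flip n a d i j) i j = d"
proof (cases "tsite n a i j")
  case True
  obtain x y z where t: "tog3 (d i j) (d i (Suc j)) (d i (Suc (Suc j))) = (x, y, z)" by (cases "tog3 (d i j) (d i (Suc j)) (d i (Suc (Suc j)))") auto
  have t2: "tog3 x y z = (d i j, d i (Suc j), d i (Suc (Suc j)))" using tog3_inv[OF t] .
  show ?thesis using True t t2 unfolding flip_def by (auto simp: fun_eq_iff)
next
  case False
  obtain x y where t: "tog2 (d i j) (d i (Suc j)) = (x, y)" by (cases "tog2 (d i j) (d i (Suc j))") auto
  have t2: "tog2 x y = (d i j, d i (Suc j))" using tog2_inv[OF t] .
  show ?thesis using False t t2 unfolding flip_def by (auto simp: fun_eq_iff)
qed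

lemma pa_pa_disj: "pa n a i j \<Longrightarrow> pa n a i j' \<Longrightarrow> j \<noteq> j' \<Longrightarrow> Suc j' < j \<or> Suc j < j'"
  unfolding pa_def
  by (metis Suc_lessI diff_Suc_1 linorder_neqE_nat not_less_eq_eq le_antisym One_nat_def)

lemma ts_pa_disj: "tsite n a i j \<Longrightarrow> pa n a i j' \<Longrightarrow> Suc j' < j \<or> Suc (Suc j) < j'"
proof (rule ccontr)
  assume t: "tsite n a i j" and p: "pa n a i j'" and c: "\<not> (Suc j' < j \<or> Suc (Suc j) < j')"
  then have "j' = j - 1 \<and> j \<ge> 2 \<or> j' = j \<or> j' = Suc j \<or> j' = Suc (Suc j)"
    using p unfolding pa_def by auto
  then show False
  proof (elim disjE)
    assume "j' = j - 1 \<and> j \<ge> 2"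
    then show False using t p unfolding tsite_def pa_def by (cases j) auto
  next
    assume "j' = j" then show False using t p unfolding tsite_def pa_def by auto
  next
    assume "j' = Suc j" then show False using t p unfolding tsite_def pa_def by auto
  next
    assume "j' = Suc (Suc j)" then show False using t p unfolding tsite_def pa_def by auto
  qed
qed

lemma ts_not_pa: "tsite n a i j \<Longrightarrow> \<not> pa n a i j"
  unfolding tsite_def pa_def by auto

lemma flip_same:
  assumes "(i, j) \<in> sites n a d"
    and "i' \<noteq> i \<or> (c \<noteq> j \<and> c \<noteq> Suc j \<and> (tsite n a i j \<longrightarrow> c \<noteq> Suc (Suc j)))"
  shows "flip n a d i j i' c = d i' c"
proof (cases "tsite n a i j")
  case True
  obtain x y z where t: "tog3 (d i j) (d i (Suc j)) (d i (Suc (Suc j))) = (x, y, z)" by (cases "tog3 (d i j) (d i (Suc j)) (d i (Suc (Suc j)))") auto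
  show ?thesis using True t assms(2) unfolding flip_def by auto
next
  case False
  obtain x y where t: "tog2 (d i j) (d i (Suc j)) = (x, y)" by (cases "tog2 (d i j) (d i (Suc j))") auto
  show ?thesis using False t assms(2) unfolding flip_def by auto
qed

lemma sites_flip:
  assumes s: "(i, j) \<in> sites n a d"
  shows "sites n a (flip n a d i j) = sites n a d"
proof -
  define d' where "d' = flip n a d i j"
  have "psite n a d' i' j' \<longleftrightarrow> psite n a d i' j'" for i' j'
  proof (cases "(i', j') = (i, j)")
    case True
    show ?thesis
    proof (cases "tsite n a i j")
      case True
      then show ?thesis using \<open>(i', j') = (i, j)\<close> ts_not_pa unfolding psite_def by auto
    next
      case False
      then have ps: "psite n a d i j" using s unfolding sites_def by auto
      obtain x y where t: "tog2 (d i j) (d i (Suc j)) = (x, y)" by (cases "tog2 (d i j) (d i (Suc j))") auto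
      have "d' i j = x" "d' i (Suc j) = y" using False t unfolding d'_def flip_def by auto
      then show ?thesis using ps tog2_pword[OF _ t] \<open>(i', j') = (i, j)\<close> unfolding psite_def by auto
    qed
  next
    case False
    show ?thesis
    proof (cases "pa n a i' j'")
      case False then show ?thesis unfolding psite_def by auto
    next
      case True
      have "i' \<noteq> i \<or> (j' \<noteq> j \<and> j' \<noteq> Suc j \<and> (tsite n a i j \<longrightarrow> j' \<noteq> Suc (Suc j))) \<and>
                    (Suc j' \<noteq> j \<and> Suc j' \<noteq> Suc j \<and> (tsite n a i j \<longrightarrow> Suc j' \<noteq> Suc (Suc j)))"
      proof (cases "i' = i")
        case ii: True
        then have jj: "j' \<noteq> j" using False by auto
        show ?thesis
        proof (cases "tsite n a i j")
          case True
          then show ?thesis using ts_pa_disj[OF True, of j'] \<open>pa n a i' j'\<close> ii by auto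
        next
          case nt: False
          then have "pa n a i j" using s unfolding sites_def psite_def by auto
          then show ?thesis using pa_pa_disj[of n a i j j'] \<open>pa n a i' j'\<close> ii jj nt by auto
        qed
      qed simp
      then have "d' i' j' = d i' j'" "d' i' (Suc j') = d i' (Suc j')"
        unfolding d'_def using flip_same[OF s] by blast+
      then show ?thesis unfolding psite_def by simp
    qed
  qed
  then show ?thesis unfolding sites_def d'_def by auto
qed

lemma ac_inst:
  assumes "arrowed_cond n a d"
  shows "in_tri n i j \<Longrightarrow> 2 \<le> i \<Longrightarrow> j < i \<Longrightarrow> a i j = a (i - 1) j \<Longrightarrow> has_ne (d i j)
        \<Longrightarrow> a i (j + 1) = a i j \<and> has_nw (d i (j + 1))"
    and "in_tri n i j \<Longrightarrow> 2 \<le> i \<Longrightarrow> 2 \<le> j \<Longrightarrow> a i j = a (i - 1) (j - 1) \<Longrightarrow> has_nw (d i j)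
        \<Longrightarrow> a i (j - 1) = a i j \<and> has_ne (d i (j - 1))"
  using assms unfolding arrowed_cond_def by blast+

lemma site_a:
  assumes g: "gt_pattern n k a" and s: "pa n a i j \<or> tsite n a i j"
  shows "a (i-1) j = a i j" "in_tri n i j" "in_tri n i (Suc j)" "in_tri n (i-1) j" "2 \<le> i" "j < i"
    "a i (Suc j) = a i j"
proof -
  have b: "2 \<le> i" "i \<le> n" "1 \<le> j" "Suc j \<le> i" "a i (Suc j) = a i j"
    using s unfolding pa_def tsite_def by auto
  then show "a (i-1) j = a i j" using interl[OF g, of i j] by auto
  show "in_tri n i j" "in_tri n i (Suc j)" "in_tri n (i-1) j" "2 \<le> i" "j < i" "a i (Suc j) = a i j"
    using b unfolding in_tri_def by auto
qed

lemma tsite_a: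
  assumes g: "gt_pattern n k a" and s: "tsite n a i j"
  shows "a (i-1) (Suc j) = a i j" "in_tri n i (Suc (Suc j))" "in_tri n (i-1) (Suc j)" "a i (Suc (Suc j)) = a i j"
proof -
  have b: "3 \<le> i" "i \<le> n" "1 \<le> j" "Suc (Suc j) \<le> i" "a i (Suc j) = a i j" "a i (Suc (Suc j)) = a i j"
    using s unfolding tsite_def by auto
  then show "a (i-1) (Suc j) = a i j" using interl[OF g, of i "Suc j"] by auto
  show "in_tri n i (Suc (Suc j))" "in_tri n (i-1) (Suc j)" "a i (Suc (Suc j)) = a i j"
    using b unfolding in_tri_def by auto
qed

lemma nd_inst: "no_double n d \<Longrightarrow> in_tri n i j \<Longrightarrow> d i j \<noteq> Both"
  unfolding no_double_def by auto

lemma tsite_valid3: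
  assumes g: "gt_pattern n k a" and ac: "arrowed_cond n a d" and nd: "no_double n d"
    and t: "tsite n a i j"
  shows "valid3 (d i j) (d i (Suc j)) (d i (Suc (Suc j)))"
proof -
  note A = site_a[OF g disjI2[OF t]] tsite_a[OF g t]
  have t3: "3 \<le> i" "Suc (Suc j) \<le> i" "1 \<le> j" using t unfolding tsite_def by auto
  have c1: "has_ne (d i j) \<Longrightarrow> has_nw (d i (Suc j))"
  proof -
    assume h: "has_ne (d i j)"
    have "a i j = a (i - 1) j" using A(1) by simp
    from ac_inst(1)[OF ac A(2) A(5) A(6) this h] show ?thesis by simp
  qed
  have c2: "has_ne (d i (Suc j)) \<Longrightarrow> has_nw (d i (Suc (Suc j)))"
  proof -
    assume h: "has_ne (d i (Suc j))"
    have "a i (Suc j) = a (i - 1) (Suc j)" using A(7) A(8) by simp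
    moreover have "Suc j < i" using t3 by simp
    ultimately show ?thesis using ac_inst(1)[OF ac A(3) A(5)] h by simp
  qed
  have c3: "has_nw (d i (Suc j)) \<Longrightarrow> has_ne (d i j)"
  proof -
    assume h: "has_nw (d i (Suc j))"
    have "a i (Suc j) = a (i - 1) (Suc j - 1)" using A(1) A(7) by simp
    moreover have "2 \<le> Suc j" using t3 by simp
    ultimately show ?thesis using ac_inst(2)[OF ac A(3) A(5)] h by simp
  qed
  have c4: "has_nw (d i (Suc (Suc j))) \<Longrightarrow> has_ne (d i (Suc j))"
  proof -
    assume h: "has_nw (d i (Suc (Suc j)))"
    have "a i (Suc (Suc j)) = a (i - 1) (Suc (Suc j) - 1)" using A(8) A(11) by simp
    moreover have "2 \<le> Suc (Suc j)" using t3 by simp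
    ultimately have "a i (Suc (Suc j) - 1) = a i (Suc (Suc j)) \<and> has_ne (d i (Suc (Suc j) - 1))"
      using ac_inst(2)[OF ac A(9) A(5)] h by blast
    then show ?thesis by simp
  qed
  have n: "d i j \<noteq> Both" "d i (Suc j) \<noteq> Both" "d i (Suc (Suc j)) \<noteq> Both"
    using nd_inst[OF nd A(2)] nd_inst[OF nd A(3)] nd_inst[OF nd A(9)] by auto
  show ?thesis using c1 c2 c3 c4 n unfolding valid3_def has_ne_def has_nw_def
    by (cases "d i j"; cases "d i (Suc j)"; cases "d i (Suc (Suc j))") simp_all
qed

lemma flip_ts_eq:
  assumes "tsite n a i j" "tog3 (d i j) (d i (Suc j)) (d i (Suc (Suc j))) = (x, y, z)"
  shows "flip n a d i j = d(i := (d i)(j := x, Suc j := y, Suc (Suc j) := z))"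
  using assms unfolding flip_def by simp

lemma flip_pa_eq:
  assumes "\<not> tsite n a i j" "tog2 (d i j) (d i (Suc j)) = (x, y)"
  shows "flip n a d i j = d(i := (d i)(j := x, Suc j := y))"
  using assms unfolding flip_def by simp

lemma ac_flip_ts:
  assumes g: "gt_pattern n k a" and ac: "arrowed_cond n a d" and nd: "no_double n d"
    and t: "tsite n a i j"
    and tg: "tog3 (d i j) (d i (Suc j)) (d i (Suc (Suc j))) = (x, y, z)"
  shows "arrowed_cond n a (d(i := (d i)(j := x, Suc j := y, Suc (Suc j) := z)))"
proof -
  define d' where "d' = d(i := (d i)(j := x, Suc j := y, Suc (Suc j) := z))"
  have V: "valid3 x y z" using tog3_valid[OF tsite_valid3[OF g ac nd t] tg] by simp
  note A = site_a[OF g disjI2[OF t]] tsite_a[OF g t]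
  have T: "3 \<le> i" "i \<le> n" "1 \<le> j" "Suc (Suc j) \<le> i"
     "j = 1 \<or> (a i (j-1) \<noteq> a i j \<and> a (i-1) (j-1) \<noteq> a i j)"
     "Suc (Suc j) = i \<or> (a i (Suc (Suc (Suc j))) \<noteq> a i j \<and> a (i-1) (Suc (Suc j)) \<noteq> a i j)"
    using t unfolding tsite_def by auto
  have D: "d' i' c = (if i' = i \<and> c = j then x else if i' = i \<and> c = Suc j then y
      else if i' = i \<and> c = Suc (Suc j) then z else d i' c)" for i' c
    unfolding d'_def by simp
  have C1: "j' + 1 \<le> i' \<and> a i' (j' + 1) = a i' j' \<and> has_nw (d' i' (j' + 1))"
    if P: "in_tri n i' j'" "2 \<le> i'" "j' < i'" "a i' j' = a (i' - 1) j'" "has_ne (d' i' j')" for i' j'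
  proof -
    consider "i' \<noteq> i \<or> Suc j' < j \<or> Suc (Suc j) < j'" | "i' = i" "Suc j' = j" | "i' = i" "j' = j"
      | "i' = i" "j' = Suc j" | "i' = i" "j' = Suc (Suc j)" by linarith
    then show ?thesis
    proof cases
      case 1
      then have "d' i' j' = d i' j'" "d' i' (Suc j') = d i' (Suc j')" using D by auto
      then show ?thesis using ac_inst(1)[OF ac P(1-4)] P(3,5) by simp
    next
      case 2
      then have "d' i' j' = d i' j'" using D by auto
      then have "a i (Suc j') = a i j'" using ac_inst(1)[OF ac P(1-4)] P(5) 2 by simp
      moreover have "j \<noteq> 1" "j - 1 = j'" using 2 P(1) unfolding in_tri_def by auto
      moreover have "a i (j - 1) \<noteq> a i j" using T(5) \<open>j \<noteq> 1\<close> by blast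
      ultimately have False using 2(2) by simp
      then show ?thesis ..
    next
      case 3
      have "d' i (j) = x" using D by simp
      then have "x = NE" "y = NW" using P(5) 3 valid3_E1[OF V] by auto
      then show ?thesis using 3 D A(7) T(4) unfolding has_nw_def by simp
    next
      case 4
      have "d' i (Suc j) = y" using D by simp
      then have "y = NE" "z = NW" using P(5) 4 valid3_E2[OF V] by auto
      then show ?thesis using 4 D A(7) A(11) T(4) unfolding has_nw_def by simp
    next
      case 5
      then have "Suc (Suc j) \<noteq> i" using P(3) by simp
      then have "a (i-1) (Suc (Suc j)) \<noteq> a i j" using T(6) by blast
      moreover have "a i (Suc (Suc j)) = a (i-1) (Suc (Suc j))" using P(4) 5 by simp
      ultimately have False using A(11) by simp
      then show ?thesis ..
    qed
  qed
  have C2: "1 \<le> j' - 1 \<and> a i' (j' - 1) = a i' j' \<and> has_ne (d' i' (j' - 1))"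
    if P: "in_tri n i' j'" "2 \<le> i'" "2 \<le> j'" "a i' j' = a (i' - 1) (j' - 1)" "has_nw (d' i' j')" for i' j'
  proof -
    consider "i' \<noteq> i \<or> j' < j \<or> Suc (Suc (Suc j)) < j'" | "i' = i" "j' = j" | "i' = i" "j' = Suc j"
      | "i' = i" "j' = Suc (Suc j)" | "i' = i" "j' = Suc (Suc (Suc j))" by linarith
    then show ?thesis
    proof cases
      case 1
      then have "d' i' j' = d i' j'" "d' i' (j' - 1) = d i' (j' - 1)" using D P(3) by auto
      then show ?thesis using ac_inst(2)[OF ac P(1-4)] P(3,5) by simp
    next
      case 2
      then have "j \<noteq> 1" using P(3) by simp
      then have "a (i-1) (j-1) \<noteq> a i j" using T(5) by blast
      moreover have "a i j = a (i-1) (j-1)" using P(4) 2 by simp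
      ultimately have False by simp
      then show ?thesis ..
    next
      case 3
      have "d' i (Suc j) = y" using D by simp
      then have "y = NW" "x = NE" using P(5) 3 valid3_W2[OF V] by auto
      then show ?thesis using 3 D A(7) T(3) T(4) unfolding has_ne_def by simp
    next
      case 4
      have "d' i (Suc (Suc j)) = z" using D by simp
      then have "z = NW" "y = NE" using P(5) 4 valid3_W3[OF V] by auto
      then show ?thesis using 4 D A(7) A(11) T(3) T(4) unfolding has_ne_def by simp
    next
      case 5
      then have "d' i' j' = d i' j'" using D by auto
      then have "a i (j' - 1) = a i j'" using ac_inst(2)[OF ac P(1-4)] P(5) 5 by simp
      moreover have "Suc (Suc j) \<noteq> i" using 5 P(1) unfolding in_tri_def by auto
      moreover have "a i (Suc (Suc (Suc j))) \<noteq> a i j" using T(6) \<open>Suc (Suc j) \<noteq> i\<close> by blast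
      ultimately have False using 5 A(11) by simp
      then show ?thesis ..
    qed
  qed
  show ?thesis unfolding d'_def[symmetric] arrowed_cond_def using C1 C2 by blast
qed

lemma pword_facts:
  assumes "pword x y"
  shows "\<not> has_ne y" "\<not> has_nw x" "has_ne x \<Longrightarrow> x = NE \<and> y = NW" "has_nw y \<Longrightarrow> y = NW \<and> x = NE"
    "x \<noteq> Both" "y \<noteq> Both"
  using assms unfolding pword_def has_ne_def has_nw_def by auto

lemma ac_flip_pa:
  assumes g: "gt_pattern n k a" and ac: "arrowed_cond n a d"
    and p: "pa n a i j" and W: "pword x y"
  shows "arrowed_cond n a (d(i := (d i)(j := x, Suc j := y)))"
proof -
  define d' where "d' = d(i := (d i)(j := x, Suc j := y))"
  note A = site_a[OF g disjI1[OF p]]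
  have T: "2 \<le> i" "i \<le> n" "1 \<le> j" "Suc j \<le> i" "a i (Suc j) = a i j"
     "j = 1 \<or> a i (j-1) \<noteq> a i j" "i < Suc (Suc j) \<or> a i (Suc (Suc j)) \<noteq> a i j"
    using p unfolding pa_def by auto
  have D: "d' i' c = (if i' = i \<and> c = j then x else if i' = i \<and> c = Suc j then y else d i' c)" for i' c
    unfolding d'_def by simp
  have C1: "j' + 1 \<le> i' \<and> a i' (j' + 1) = a i' j' \<and> has_nw (d' i' (j' + 1))"
    if P: "in_tri n i' j'" "2 \<le> i'" "j' < i'" "a i' j' = a (i' - 1) j'" "has_ne (d' i' j')" for i' j'
  proof -
    consider "i' \<noteq> i \<or> Suc j' < j \<or> Suc j < j'" | "i' = i" "Suc j' = j" | "i' = i" "j' = j"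
      | "i' = i" "j' = Suc j" by linarith
    then show ?thesis
    proof cases
      case 1
      then have "d' i' j' = d i' j'" "d' i' (Suc j') = d i' (Suc j')" using D by auto
      then show ?thesis using ac_inst(1)[OF ac P(1-4)] P(3,5) by simp
    next
      case 2
      then have "d' i' j' = d i' j'" using D by auto
      then have "a i (Suc j') = a i j'" using ac_inst(1)[OF ac P(1-4)] P(5) 2 by simp
      moreover have "j \<noteq> 1" "j - 1 = j'" using 2 P(1) unfolding in_tri_def by auto
      moreover have "a i (j - 1) \<noteq> a i j" using T(6) \<open>j \<noteq> 1\<close> by blast
      ultimately have False using 2(2) by simp
      then show ?thesis ..
    next
      case 3
      have "d' i j = x" using D by simp
      then have "x = NE" "y = NW" using P(5) 3 pword_facts(3)[OF W] by auto
      then show ?thesis using 3 D T(4) T(5) unfolding has_nw_def by simp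
    next
      case 4
      have "d' i (Suc j) = y" using D by simp
      then have False using P(5) 4 pword_facts(1)[OF W] by auto
      then show ?thesis ..
    qed
  qed
  have C2: "1 \<le> j' - 1 \<and> a i' (j' - 1) = a i' j' \<and> has_ne (d' i' (j' - 1))"
    if P: "in_tri n i' j'" "2 \<le> i'" "2 \<le> j'" "a i' j' = a (i' - 1) (j' - 1)" "has_nw (d' i' j')" for i' j'
  proof -
    consider "i' \<noteq> i \<or> j' < j \<or> Suc (Suc j) < j'" | "i' = i" "j' = j" | "i' = i" "j' = Suc j"
      | "i' = i" "j' = Suc (Suc j)" by linarith
    then show ?thesis
    proof cases
      case 1
      then have "d' i' j' = d i' j'" "d' i' (j' - 1) = d i' (j' - 1)" using D P(3) by auto
      then show ?thesis using ac_inst(2)[OF ac P(1-4)] P(3,5) by simp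
    next
      case 2
      have "d' i j = x" using D by simp
      then have False using P(5) 2 pword_facts(2)[OF W] by auto
      then show ?thesis ..
    next
      case 3
      have "d' i (Suc j) = y" using D by simp
      then have "y = NW" "x = NE" using P(5) 3 pword_facts(4)[OF W] by auto
      then show ?thesis using 3 D T(3) T(5) unfolding has_ne_def by simp
    next
      case 4
      then have "d' i' j' = d i' j'" using D by auto
      then have "a i (j' - 1) = a i j'" using ac_inst(2)[OF ac P(1-4)] P(5) 4 by simp
      moreover have "\<not> i < Suc (Suc j)" using 4 P(1) unfolding in_tri_def by auto
      moreover have "a i (Suc (Suc j)) \<noteq> a i j" using T(7) \<open>\<not> i < Suc (Suc j)\<close> by blast
      ultimately have False using 4 T(5) by simp
      then show ?thesis ..
    qed
  qed
  show ?thesis unfolding d'_def[symmetric] arrowed_cond_def using C1 C2 by blast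
qed

lemma flip_good:
  assumes g: "gt_pattern n k a" and dn: "dec_normal n d" and ac: "arrowed_cond n a d"
    and nd: "no_double n d" and s: "(i, j) \<in> sites n a d"
  shows "dec_normal n (flip n a d i j) \<and> arrowed_cond n a (flip n a d i j) \<and> no_double n (flip n a d i j)"
proof (cases "tsite n a i j")
  case True
  obtain x y z where tg: "tog3 (d i j) (d i (Suc j)) (d i (Suc (Suc j))) = (x, y, z)"
    by (cases "tog3 (d i j) (d i (Suc j)) (d i (Suc (Suc j)))") auto
  have V: "valid3 x y z" using tog3_valid[OF tsite_valid3[OF g ac nd True] tg] by simp
  have F: "flip n a d i j = d(i := (d i)(j := x, Suc j := y, Suc (Suc j) := z))"
    by (rule flip_ts_eq[where d=d, OF True tg])
  note A = site_a[OF g disjI2[OF True]] tsite_a[OF g True]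
  have "dec_normal n (flip n a d i j)"
    unfolding dec_normal_def F using dn A(2,3,9) unfolding dec_normal_def by auto
  moreover have "no_double n (flip n a d i j)"
  proof -
    have "x \<noteq> Both" "y \<noteq> Both" "z \<noteq> Both" using V unfolding valid3_def by blast+
    then show ?thesis unfolding no_double_def F using nd unfolding no_double_def by auto
  qed
  moreover have "arrowed_cond n a (flip n a d i j)"
    unfolding F by (rule ac_flip_ts[OF g ac nd True tg])
  ultimately show ?thesis by blast
next
  case False
  then have p: "pa n a i j" and W0: "pword (d i j) (d i (Suc j))"
    using s unfolding sites_def psite_def by auto
  obtain x y where tg: "tog2 (d i j) (d i (Suc j)) = (x, y)"
    by (cases "tog2 (d i j) (d i (Suc j))") auto
  have W: "pword x y" using tog2_pword[OF W0 tg] by simp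
  have F: "flip n a d i j = d(i := (d i)(j := x, Suc j := y))"
    by (rule flip_pa_eq[where d=d, OF False tg])
  note A = site_a[OF g disjI1[OF p]]
  have "dec_normal n (flip n a d i j)"
    unfolding dec_normal_def F using dn A(2,3) unfolding dec_normal_def by auto
  moreover have "no_double n (flip n a d i j)"
    unfolding no_double_def F using nd pword_facts(5,6)[OF W] unfolding no_double_def by auto
  moreover have "arrowed_cond n a (flip n a d i j)"
    unfolding F by (rule ac_flip_pa[OF g ac p W])
  ultimately show ?thesis by blast
qed

lemma sp_mem: "(p, q) \<in> special_triangles n a d \<longleftrightarrow> in_tri n p q \<and> p < n \<and>
      a p q = a (Suc p) q \<and> a p q = a (Suc p) (Suc q) \<and>
      has_ne (d (Suc p) q) \<and> has_nw (d (Suc p) (Suc q))"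
  unfolding special_triangles_def by simp

lemma finite_sp: "finite (special_triangles n a d)"
  by (rule finite_subset[of _ "{..n} \<times> {..n}"]) (auto simp: special_triangles_def in_tri_def)

lemma sp_row: "2 \<le> i \<Longrightarrow> (i - 1, q) \<in> special_triangles n a e \<longleftrightarrow> in_tri n (i-1) q \<and> i - 1 < n \<and>
      a (i-1) q = a i q \<and> a (i-1) q = a i (Suc q) \<and> has_ne (e i q) \<and> has_nw (e i (Suc q))"
  using sp_mem[of "i-1" q n a e] by simp

lemma sp_u:
  assumes g: "gt_pattern n k a" and s: "pa n a i j \<or> tsite n a i j"
  shows "(i - 1, j) \<in> special_triangles n a e \<longleftrightarrow> has_ne (e i j) \<and> has_nw (e i (Suc j))"
proof -
  note A = site_a[OF g s]
  have "i \<le> n" using s unfolding pa_def tsite_def by auto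
  then show ?thesis using sp_row[OF A(5), of j n a e] A by auto
qed

lemma sp_v_pa:
  assumes p: "pa n a i j"
  shows "(i - 1, Suc j) \<notin> special_triangles n a e"
proof
  assume m: "(i - 1, Suc j) \<in> special_triangles n a e"
  have "2 \<le> i" using p unfolding pa_def by auto
  then have "in_tri n (i-1) (Suc j)" "a i (Suc j) = a i (Suc (Suc j))" using sp_row[of i "Suc j" n a e] m by auto
  moreover have "\<not> i < Suc (Suc j)" using calculation(1) unfolding in_tri_def by auto
  ultimately show False using p unfolding pa_def by auto
qed

lemma sp_v_ts:
  assumes g: "gt_pattern n k a" and t: "tsite n a i j"
  shows "(i - 1, Suc j) \<in> special_triangles n a e \<longleftrightarrow> has_ne (e i (Suc j)) \<and> has_nw (e i (Suc (Suc j)))"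
proof -
  note A = site_a[OF g disjI2[OF t]] tsite_a[OF g t]
  have "i \<le> n" using t unfolding tsite_def by auto
  then show ?thesis using sp_row[OF A(5), of "Suc j" n a e] A by auto
qed

lemma sp_left:
  assumes s: "pa n a i j \<or> tsite n a i j" and m: "(i - 1, q) \<in> special_triangles n a e"
  shows "Suc q \<noteq> j"
proof
  assume q: "Suc q = j"
  have "2 \<le> i" using s unfolding pa_def tsite_def by auto
  then have "in_tri n (i-1) q" "a i q = a i (Suc q)" using sp_row[of i q n a e] m by auto
  then have "j \<noteq> 1" "j - 1 = q" "a i (j - 1) = a i j" using q unfolding in_tri_def by auto
  moreover have "j = 1 \<or> a i (j - 1) \<noteq> a i j" using s unfolding pa_def tsite_def by auto
  ultimately show False by blast
qed

lemma sp_right_ts: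
  assumes t: "tsite n a i j"
  shows "(i - 1, Suc (Suc j)) \<notin> special_triangles n a e"
proof
  assume m: "(i - 1, Suc (Suc j)) \<in> special_triangles n a e"
  have "2 \<le> i" using t unfolding tsite_def by auto
  then have "in_tri n (i-1) (Suc (Suc j))" "a i (Suc (Suc j)) = a i (Suc (Suc (Suc j)))"
    using sp_row[of i "Suc (Suc j)" n a e] m by auto
  moreover have "Suc (Suc j) \<noteq> i" using calculation(1) unfolding in_tri_def by auto
  moreover have "a i (Suc (Suc (Suc j))) \<noteq> a i j" "a i (Suc (Suc j)) = a i j"
    using t calculation(3) unfolding tsite_def by auto
  ultimately show False by simp
qed

lemma sign_gen:
  assumes "finite A" "finite B" "A - Q = B - Q" "odd (card (A \<inter> Q) + card (B \<inter> Q))"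
  shows "(-1::int) ^ card A = - ((-1) ^ card B)"
proof -
  have cA: "card A = card (A - Q) + card (A \<inter> Q)"
    using card_Int_Diff[OF assms(1), of Q] by simp
  have cB: "card B = card (B - Q) + card (B \<inter> Q)"
    using card_Int_Diff[OF assms(2), of Q] by simp
  show ?thesis using assms(3,4) unfolding cA cB by (auto simp: power_add minus_one_power_iff)
qed

lemma card2: "u \<noteq> v \<Longrightarrow> card (X \<inter> {u, v}) = (if u \<in> X then 1 else 0) + (if v \<in> X then 1 else 0)"
proof -
  assume uv: "u \<noteq> v"
  consider "u \<in> X" "v \<in> X" | "u \<in> X" "v \<notin> X" | "u \<notin> X" "v \<in> X" | "u \<notin> X" "v \<notin> X" by blast
  then show ?thesis
  proof cases
    case 1 then have "X \<inter> {u, v} = {u, v}" by auto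
    then show ?thesis using 1 uv by simp
  next
    case 2 then have "X \<inter> {u, v} = {u}" by auto
    then show ?thesis using 2 by simp
  next
    case 3 then have "X \<inter> {u, v} = {v}" by auto
    then show ?thesis using 3 uv by simp
  next
    case 4 then have "X \<inter> {u, v} = {}" by auto
    then show ?thesis using 4 by simp
  qed
qed

lemma sign_flip:
  assumes g: "gt_pattern n k a" and ac: "arrowed_cond n a d" and nd: "no_double n d"
    and s: "(i, j) \<in> sites n a d"
  shows "(-1::int) ^ card (special_triangles n a (flip n a d i j)) = - ((-1) ^ card (special_triangles n a d))"
proof -
  define d' where "d' = flip n a d i j"
  have s': "pa n a i j \<or> tsite n a i j" using s unfolding sites_def psite_def by auto
  have i2: "2 \<le> i" using s' unfolding pa_def tsite_def by auto
  define Q where "Q = {(i - 1, j), (i - 1, Suc j)}"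
  have R: "special_triangles n a d' - Q = special_triangles n a d - Q"
  proof (rule set_eqI)
    fix pq :: "nat \<times> nat"
    obtain p q where pq: "pq = (p, q)" by (cases pq)
    have "(p, q) \<in> special_triangles n a d' \<longleftrightarrow> (p, q) \<in> special_triangles n a d" if nQ: "(p, q) \<notin> Q"
    proof (cases "Suc p = i")
      case False
      then have "d' (Suc p) q = d (Suc p) q" "d' (Suc p) (Suc q) = d (Suc p) (Suc q)"
        unfolding d'_def using flip_same[OF s] by auto
      then show ?thesis unfolding sp_mem by simp
    next
      case True
      then have p: "p = i - 1" by simp
      have qq: "q \<noteq> j" "q \<noteq> Suc j" using nQ p unfolding Q_def by auto
      show ?thesis
      proof (cases "Suc q = j \<or> (tsite n a i j \<and> q = Suc (Suc j))")
        case True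
        then have "(p, q) \<notin> special_triangles n a d'" "(p, q) \<notin> special_triangles n a d"
          using sp_left[OF s'] sp_right_ts p by blast+
        then show ?thesis by simp
      next
        case False
        then have "d' i q = d i q" "d' i (Suc q) = d i (Suc q)"
          unfolding d'_def using flip_same[OF s] qq by auto
        then show ?thesis unfolding sp_mem using True by simp
      qed
    qed
    then show "pq \<in> special_triangles n a d' - Q \<longleftrightarrow> pq \<in> special_triangles n a d - Q"
      using pq by auto
  qed
  have uv: "(i - 1, j) \<noteq> (i - 1, Suc j)" by simp
  have O: "odd (card (special_triangles n a d' \<inter> Q) + card (special_triangles n a d \<inter> Q))"
  proof (cases "tsite n a i j")
    case True
    obtain x y z where tg: "tog3 (d i j) (d i (Suc j)) (d i (Suc (Suc j))) = (x, y, z)"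
      by (cases "tog3 (d i j) (d i (Suc j)) (d i (Suc (Suc j)))") auto
    have V0: "valid3 (d i j) (d i (Suc j)) (d i (Suc (Suc j)))" by (rule tsite_valid3[OF g ac nd True])
    note TV = tog3_valid[OF V0 tg]
    have V: "valid3 x y z" using TV by blast
    have F: "d' = d(i := (d i)(j := x, Suc j := y, Suc (Suc j) := z))"
      unfolding d'_def by (rule flip_ts_eq[where d=d, OF True tg])
    have nb: "x \<noteq> Both" "y \<noteq> Both" "z \<noteq> Both" "d i j \<noteq> Both" "d i (Suc j) \<noteq> Both" "d i (Suc (Suc j)) \<noteq> Both"
      using V V0 unfolding valid3_def by blast+
    have m1: "(i - 1, j) \<in> special_triangles n a d' \<longleftrightarrow> x = NE \<and> y = NW"
      using sp_u[OF g s', of d'] F nb unfolding has_ne_def has_nw_def by simp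
    have m2: "(i - 1, Suc j) \<in> special_triangles n a d' \<longleftrightarrow> y = NE \<and> z = NW"
      using sp_v_ts[OF g True, of d'] F nb unfolding has_ne_def has_nw_def by simp
    have m3: "(i - 1, j) \<in> special_triangles n a d \<longleftrightarrow> d i j = NE \<and> d i (Suc j) = NW"
      using sp_u[OF g s', of d] nb unfolding has_ne_def has_nw_def by simp
    have m4: "(i - 1, Suc j) \<in> special_triangles n a d \<longleftrightarrow> d i (Suc j) = NE \<and> d i (Suc (Suc j)) = NW"
      using sp_v_ts[OF g True, of d] nb unfolding has_ne_def has_nw_def by simp
    show ?thesis unfolding Q_def card2[OF uv] m1 m2 m3 m4 using TV by auto
  next
    case False
    then have p: "pa n a i j" and W0: "pword (d i j) (d i (Suc j))"
      using s unfolding sites_def psite_def by auto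
    obtain x y where tg: "tog2 (d i j) (d i (Suc j)) = (x, y)"
      by (cases "tog2 (d i j) (d i (Suc j))") auto
    note TW = tog2_pword[OF W0 tg]
    have F: "d' = d(i := (d i)(j := x, Suc j := y))"
      unfolding d'_def by (rule flip_pa_eq[where d=d, OF False tg])
    have m1: "(i - 1, j) \<in> special_triangles n a d' \<longleftrightarrow> x = NE"
      using sp_u[OF g s', of d'] F TW unfolding has_ne_def has_nw_def pword_def by auto
    have m3: "(i - 1, j) \<in> special_triangles n a d \<longleftrightarrow> d i j = NE"
      using sp_u[OF g s', of d] W0 unfolding has_ne_def has_nw_def pword_def by auto
    show ?thesis unfolding Q_def card2[OF uv] m1 m3 using sp_v_pa[OF p] TW by auto
  qed
  show ?thesis unfolding d'_def[symmetric]
    by (rule sign_gen[OF finite_sp finite_sp R]) (use O in \<open>simp add: add.commute\<close>)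
qed

definition rowset :: "(nat \<Rightarrow> nat \<Rightarrow> int) \<Rightarrow> nat \<Rightarrow> int \<Rightarrow> nat set" where
  "rowset a i x = {j. 1 \<le> j \<and> j \<le> i \<and> a i j = x}"

lemma three_card:
  assumes "p \<in> rowset a i x" "q \<in> rowset a i x" "r \<in> rowset a i x" "p \<noteq> q" "q \<noteq> r" "p \<noteq> r"
  shows "3 \<le> card (rowset a i x)"
proof -
  have f: "finite (rowset a i x)" unfolding rowset_def by (rule finite_subset[of _ "{..i}"]) auto
  have "{p, q, r} \<subseteq> rowset a i x" using assms by auto
  then have "card {p, q, r} \<le> card (rowset a i x)" using card_mono[OF f] by blast
  moreover have "card {p, q, r} = 3" using assms by simp
  ultimately show ?thesis by simp
qed

lemma three_sorted:
  assumes g: "gt_pattern n k a" and i: "i \<le> n"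
    and m: "p \<in> rowset a i x" "q \<in> rowset a i x" "r \<in> rowset a i x" "p < q" "q < r"
  shows "1 \<le> p \<and> Suc (Suc p) \<le> i \<and> a i (Suc p) = a i p \<and> a i (Suc (Suc p)) = a i p"
proof -
  have b: "1 \<le> p" "r \<le> i" "a i p = x" "a i q = x" "a i r = x" using m unfolding rowset_def by auto
  have "a i p \<le> a i (Suc p)" using row_mono[OF g, of p "Suc p" i] b m(4,5) i by auto
  moreover have "a i (Suc p) \<le> a i q" using row_mono[OF g, of "Suc p" q i] b m(4,5) i by auto
  moreover have "a i p \<le> a i (Suc (Suc p))" using row_mono[OF g, of p "Suc (Suc p)" i] b m(4,5) i by auto
  moreover have "a i (Suc (Suc p)) \<le> a i r" using row_mono[OF g, of "Suc (Suc p)" r i] b m(4,5) i by auto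
  ultimately show ?thesis using b m(4,5) by auto
qed

lemma three_any:
  assumes g: "gt_pattern n k a" and i: "i \<le> n"
    and m: "p \<in> rowset a i x" "q \<in> rowset a i x" "r \<in> rowset a i x" "p \<noteq> q" "q \<noteq> r" "p \<noteq> r"
  shows "\<exists>j. 1 \<le> j \<and> Suc (Suc j) \<le> i \<and> a i (Suc j) = a i j \<and> a i (Suc (Suc j)) = a i j"
proof -
  have H: "\<And>p q r. p \<in> rowset a i x \<Longrightarrow> q \<in> rowset a i x \<Longrightarrow> r \<in> rowset a i x \<Longrightarrow> p < q \<Longrightarrow> q < r \<Longrightarrow>
     \<exists>j. 1 \<le> j \<and> Suc (Suc j) \<le> i \<and> a i (Suc j) = a i j \<and> a i (Suc (Suc j)) = a i j"
    using three_sorted[OF g i] by blast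
  consider "p < q" "q < r" | "p < r" "r < q" | "q < p" "p < r" | "q < r" "r < p" | "r < p" "p < q" | "r < q" "q < p"
    using m(4-6) by linarith
  then show ?thesis using H m(1-3) by cases blast+
qed

lemma card_three:
  assumes "3 \<le> card (rowset a i x)"
  shows "\<exists>p q r. p \<in> rowset a i x \<and> q \<in> rowset a i x \<and> r \<in> rowset a i x \<and> p \<noteq> q \<and> q \<noteq> r \<and> p \<noteq> r"
proof -
  obtain T where "T \<subseteq> rowset a i x" "card T = 3" "finite T" using obtain_subset_with_card_n[OF assms] by metis
  then show ?thesis unfolding card_3_iff by blast
qed

lemma triple_to_site:
  assumes g: "gt_pattern n k a"
  shows "1 \<le> j \<Longrightarrow> Suc (Suc j) \<le> i \<Longrightarrow> i \<le> n \<Longrightarrow> a i (Suc j) = a i j \<Longrightarrow> a i (Suc (Suc j)) = a i j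
     \<Longrightarrow> \<exists>i' j'. tsite n a i' j'"
proof (induction i arbitrary: j rule: less_induct)
  case (less i)
  have i3: "3 \<le> i" using less by auto
  have I1: "a i j \<le> a (i-1) j \<and> a (i-1) j \<le> a i (Suc j)" using interl[OF g, of i j] less by auto
  have I2: "a i (Suc j) \<le> a (i-1) (Suc j) \<and> a (i-1) (Suc j) \<le> a i (Suc (Suc j))"
    using interl[OF g, of i "Suc j"] less by auto
  have e1: "a (i-1) j = a i j" using I1 less by auto
  have e2: "a (i-1) (Suc j) = a i j" using I2 less by auto
  show ?case
  proof (cases "2 \<le> j \<and> a (i-1) (j-1) = a i j")
    case True
    have "a (i-1) (Suc (j-1)) = a (i-1) (j-1)" "a (i-1) (Suc (Suc (j-1))) = a (i-1) (j-1)"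
      using True e1 e2 by auto
    moreover have "1 \<le> j - 1" "Suc (Suc (j-1)) \<le> i - 1" "i - 1 < i" "i - 1 \<le> n" using True less by auto
    ultimately show ?thesis using less.IH[of "i-1" "j-1"] by blast
  next
    case nL: False
    show ?thesis
    proof (cases "Suc (Suc j) \<noteq> i \<and> a (i-1) (Suc (Suc j)) = a i j")
      case True
      have "a (i-1) (Suc j) = a (i-1) j" "a (i-1) (Suc (Suc j)) = a (i-1) j"
        using True e1 e2 by auto
      moreover have "1 \<le> j" "Suc (Suc j) \<le> i - 1" "i - 1 < i" "i - 1 \<le> n" using True less by auto
      ultimately show ?thesis using less.IH[of "i-1" j] by blast
    next
      case nR: False
      have L: "j = 1 \<or> (a i (j-1) \<noteq> a i j \<and> a (i-1) (j-1) \<noteq> a i j)"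
      proof (cases "j = 1")
        case False
        then have "2 \<le> j" using less by auto
        then have ne: "a (i-1) (j-1) \<noteq> a i j" using nL by auto
        have "a i (j-1) \<le> a (i-1) (j-1) \<and> a (i-1) (j-1) \<le> a i (Suc (j-1))"
          using interl[OF g, of i "j-1"] less \<open>2 \<le> j\<close> by auto
        then have "a i (j-1) \<noteq> a i j" using ne \<open>2 \<le> j\<close> by auto
        then show ?thesis using ne by auto
      qed simp
      have R: "Suc (Suc j) = i \<or> (a i (Suc (Suc (Suc j))) \<noteq> a i j \<and> a (i-1) (Suc (Suc j)) \<noteq> a i j)"
      proof (cases "Suc (Suc j) = i")
        case False
        then have ne: "a (i-1) (Suc (Suc j)) \<noteq> a i j" using nR by auto
        have "a i (Suc (Suc j)) \<le> a (i-1) (Suc (Suc j)) \<and> a (i-1) (Suc (Suc j)) \<le> a i (Suc (Suc (Suc j)))"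
          using interl[OF g, of i "Suc (Suc j)"] less False by auto
        then have "a i (Suc (Suc (Suc j))) \<noteq> a i j" using ne less by auto
        then show ?thesis using ne by auto
      qed simp
      have "tsite n a i j" unfolding tsite_def using L R less i3 by auto
      then show ?thesis by blast
    qed
  qed
qed

lemma pa_from_C1:
  assumes C1: "\<forall>i x. 1 \<le> i \<and> i \<le> n \<longrightarrow> card {j. 1 \<le> j \<and> j \<le> i \<and> a i j = x} \<le> 2"
    and h: "1 \<le> j" "Suc j \<le> i" "i \<le> n" "a i (Suc j) = a i j"
  shows "pa n a i j"
proof -
  have c: "card (rowset a i (a i j)) \<le> 2" using C1 h unfolding rowset_def by auto
  have L: "j = 1 \<or> a i (j-1) \<noteq> a i j"
  proof (rule ccontr)
    assume "\<not> (j = 1 \<or> a i (j-1) \<noteq> a i j)"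
    then have "j - 1 \<in> rowset a i (a i j)" "j \<in> rowset a i (a i j)" "Suc j \<in> rowset a i (a i j)" "j - 1 \<noteq> j"
      "j \<noteq> Suc j" "j - 1 \<noteq> Suc j"
      using h unfolding rowset_def by auto
    then show False using three_card[of "j-1" a i "a i j" j "Suc j"] c by auto
  qed
  have R: "i < Suc (Suc j) \<or> a i (Suc (Suc j)) \<noteq> a i j"
  proof (rule ccontr)
    assume "\<not> (i < Suc (Suc j) \<or> a i (Suc (Suc j)) \<noteq> a i j)"
    then have "j \<in> rowset a i (a i j)" "Suc j \<in> rowset a i (a i j)" "Suc (Suc j) \<in> rowset a i (a i j)"
      using h unfolding rowset_def by auto
    then show False using three_card[of j a i "a i j" "Suc j" "Suc (Suc j)"] c by auto
  qed
  show ?thesis unfolding pa_def using h L R by auto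
qed

lemma no_site_rhs:
  assumes g: "gt_pattern n k a" and dn: "dec_normal n d" and ac: "arrowed_cond n a d"
    and nd: "no_double n d" and ns: "sites n a d = {}"
  shows "(a, d) \<in> rhs_patterns n k"
proof -
  have nt: "\<not> tsite n a i j" for i j using ns unfolding sites_def by auto
  have np: "\<not> psite n a d i j" for i j using ns unfolding sites_def by auto
  have C1: "\<forall>i x. 1 \<le> i \<and> i \<le> n \<longrightarrow> card {j. 1 \<le> j \<and> j \<le> i \<and> a i j = x} \<le> 2"
  proof (intro allI impI, rule ccontr)
    fix i x assume i: "1 \<le> i \<and> i \<le> n" and c: "\<not> card {j. 1 \<le> j \<and> j \<le> i \<and> a i j = x} \<le> 2"
    then have "3 \<le> card (rowset a i x)" unfolding rowset_def by auto
    then obtain p q r where "p \<in> rowset a i x" "q \<in> rowset a i x" "r \<in> rowset a i x" "p \<noteq> q" "q \<noteq> r" "p \<noteq> r"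
      using card_three by blast
    then obtain j where "1 \<le> j \<and> Suc (Suc j) \<le> i \<and> a i (Suc j) = a i j \<and> a i (Suc (Suc j)) = a i j"
      using three_any[OF g] i by blast
    then show False using triple_to_site[OF g, of j i] i nt by blast
  qed
  have C2: "\<forall>i j. in_tri n i j \<and> 2 \<le> i \<and> j < i \<and> a i j = a (i - 1) j \<longrightarrow> d i j \<noteq> NE"
  proof (intro allI impI notI)
    fix i j assume h: "in_tri n i j \<and> 2 \<le> i \<and> j < i \<and> a i j = a (i - 1) j" and e: "d i j = NE"
    have "a i (j + 1) = a i j \<and> has_nw (d i (j + 1))"
      using ac_inst(1)[OF ac, of i j] h e unfolding has_ne_def by auto
    moreover have "in_tri n i (Suc j)" using h unfolding in_tri_def by auto
    ultimately have "d i (Suc j) = NW" "a i (Suc j) = a i j"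
      using nd_inst[OF nd, of i "Suc j"] unfolding has_nw_def by auto
    moreover have "pa n a i j" using pa_from_C1[OF C1, of j i] h calculation(2) unfolding in_tri_def by auto
    ultimately have "psite n a d i j" using e unfolding psite_def pword_def by auto
    then show False using np by blast
  qed
  have C3: "\<forall>i j. in_tri n i j \<and> 2 \<le> i \<and> 2 \<le> j \<and> a i j = a (i - 1) (j - 1) \<longrightarrow> d i j \<noteq> NW"
  proof (intro allI impI notI)
    fix i j assume h: "in_tri n i j \<and> 2 \<le> i \<and> 2 \<le> j \<and> a i j = a (i - 1) (j - 1)" and e: "d i j = NW"
    have "a i (j - 1) = a i j \<and> has_ne (d i (j - 1))"
      using ac_inst(2)[OF ac, of i j] h e unfolding has_nw_def by auto
    moreover have "in_tri n i (j - 1)" using h unfolding in_tri_def by auto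
    ultimately have "d i (j - 1) = NE" "a i (Suc (j - 1)) = a i (j - 1)"
      using nd_inst[OF nd, of i "j - 1"] h unfolding has_ne_def by auto
    moreover have "pa n a i (j - 1)" using pa_from_C1[OF C1, of "j - 1" i] h calculation(2) unfolding in_tri_def by auto
    ultimately have "psite n a d i (j - 1)" using e h unfolding psite_def pword_def by auto
    then show False using np by blast
  qed
  have C4: "\<forall>i j j'. in_tri n i j \<and> in_tri n i j' \<and> j < j' \<and> a i j = a i j' \<longrightarrow> d i j \<noteq> NoDec \<or> d i j' \<noteq> NoDec"
  proof (intro allI impI, rule ccontr)
    fix i j j' assume h: "in_tri n i j \<and> in_tri n i j' \<and> j < j' \<and> a i j = a i j'"
      and e: "\<not> (d i j \<noteq> NoDec \<or> d i j' \<noteq> NoDec)"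
    have b: "1 \<le> j" "j' \<le> i" "i \<le> n" using h unfolding in_tri_def by auto
    show False
    proof (cases "j' = Suc j")
      case True
      then have "pa n a i j" using pa_from_C1[OF C1, of j i] h b by auto
      then have "psite n a d i j" using e True unfolding psite_def pword_def by auto
      then show False using np by blast
    next
      case False
      then have "Suc j < j'" using h by auto
      have "a i j \<le> a i (Suc j)" "a i (Suc j) \<le> a i j'"
        using row_mono[OF g, of j "Suc j" i] row_mono[OF g, of "Suc j" j' i] b \<open>Suc j < j'\<close> by auto
      then have "j \<in> rowset a i (a i j)" "Suc j \<in> rowset a i (a i j)" "j' \<in> rowset a i (a i j)"
        using h b \<open>Suc j < j'\<close> unfolding rowset_def by auto
      then have "3 \<le> card (rowset a i (a i j))" using three_card \<open>Suc j < j'\<close> by auto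
      moreover have "card (rowset a i (a i j)) \<le> 2" using C1 b h unfolding rowset_def by auto
      ultimately show False by simp
    qed
  qed
  show ?thesis unfolding rhs_patterns_def using g dn nd C1 C2 C3 C4 by auto
qed

lemma rhs_parts:
  assumes "(a, d) \<in> rhs_patterns n k"
  shows "gt_pattern n k a" "dec_normal n d" "no_double n d"
    "\<forall>i x. 1 \<le> i \<and> i \<le> n \<longrightarrow> card {j. 1 \<le> j \<and> j \<le> i \<and> a i j = x} \<le> 2"
    "\<forall>i j. in_tri n i j \<and> 2 \<le> i \<and> j < i \<and> a i j = a (i - 1) j \<longrightarrow> d i j \<noteq> NE"
    "\<forall>i j. in_tri n i j \<and> 2 \<le> i \<and> 2 \<le> j \<and> a i j = a (i - 1) (j - 1) \<longrightarrow> d i j \<noteq> NW"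
    "\<forall>i j j'. in_tri n i j \<and> in_tri n i j' \<and> j < j' \<and> a i j = a i j' \<longrightarrow> d i j \<noteq> NoDec \<or> d i j' \<noteq> NoDec"
  using assms unfolding rhs_patterns_def by auto

lemma site_not_rhs:
  assumes g: "gt_pattern n k a" and s: "(i, j) \<in> sites n a d" and r: "(a, d) \<in> rhs_patterns n k"
  shows False
proof -
  note R = rhs_parts[OF r]
  show False
  proof (cases "tsite n a i j")
    case True
    then have b: "1 \<le> j" "Suc (Suc j) \<le> i" "i \<le> n" "a i (Suc j) = a i j" "a i (Suc (Suc j)) = a i j"
      unfolding tsite_def by auto
    then have "j \<in> rowset a i (a i j)" "Suc j \<in> rowset a i (a i j)" "Suc (Suc j) \<in> rowset a i (a i j)"
      unfolding rowset_def by auto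
    then have "3 \<le> card (rowset a i (a i j))" using three_card by auto
    moreover have "card (rowset a i (a i j)) \<le> 2" using R(4) b unfolding rowset_def by auto
    ultimately show False by simp
  next
    case False
    then have p: "pa n a i j" and w: "pword (d i j) (d i (Suc j))" using s unfolding sites_def psite_def by auto
    note A = site_a[OF g disjI1[OF p]]
    show False
    proof (cases "d i j = NE")
      case True
      then show False using R(5) A by auto
    next
      case False
      then have "d i j = NoDec" "d i (Suc j) = NoDec" using w unfolding pword_def by auto
      then show False using R(7) A by force
    qed
  qed
qed

lemma rhs_in_S:
  assumes r: "(a, d) \<in> rhs_patterns n k"
  shows "arrowed_cond n a d"
proof -
  note R = rhs_parts[OF r]
  have "d i j = NE" if "in_tri n i j" "has_ne (d i j)" for i j
    using nd_inst[OF R(3) that(1)] that(2) unfolding has_ne_def by auto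
  moreover have "d i j = NW" if "in_tri n i j" "has_nw (d i j)" for i j
    using nd_inst[OF R(3) that(1)] that(2) unfolding has_nw_def by auto
  ultimately show ?thesis unfolding arrowed_cond_def using R(5,6) by metis
qed

lemma rhs_sign:
  assumes r: "(a, d) \<in> rhs_patterns n k"
  shows "special_triangles n a d = {}"
proof (rule ccontr)
  note R = rhs_parts[OF r]
  assume "special_triangles n a d \<noteq> {}"
  then obtain p q where m: "(p, q) \<in> special_triangles n a d" by auto
  then have h: "in_tri n p q" "p < n" "a p q = a (Suc p) q" "has_ne (d (Suc p) q)"
    unfolding sp_mem by auto
  have t: "in_tri n (Suc p) q" "2 \<le> Suc p" "q < Suc p" using h(1,2) unfolding in_tri_def by auto
  have "d (Suc p) q = NE" using nd_inst[OF R(3) t(1)] h(4) unfolding has_ne_def by auto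
  moreover have "a (Suc p) q = a (Suc p - 1) q" using h(3) by simp
  ultimately show False using R(5) t by blast
qed

lemma inv_sum_zero:
  fixes f :: "'a \<Rightarrow> int"
  assumes "\<And>x. x \<in> U \<Longrightarrow> \<iota> x \<in> U" "\<And>x. x \<in> U \<Longrightarrow> \<iota> (\<iota> x) = x" "\<And>x. x \<in> U \<Longrightarrow> f (\<iota> x) = - f x"
  shows "sum f U = 0"
proof -
  have "sum f U = sum (\<lambda>x. f (\<iota> x)) U"
    by (rule sum.reindex_bij_witness[of U \<iota> \<iota>]) (use assms in auto)
  also have "\<dots> = - sum f U" using assms(3) by (simp add: sum_negf)
  finally show ?thesis by simp
qed

theorem proposition2p2:
  fixes n :: nat and k :: "nat \<Rightarrow> int"
  assumes "n \<ge> 1"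
    and "\<And>j. 1 \<le> j \<Longrightarrow> j < n \<Longrightarrow> k j \<le> k (Suc j)"
  shows "(\<Sum>(a, d) \<in> {(a, d) \<in> arrowed_GT n k. no_double n d}.
            (-1::int) ^ card (special_triangles n a d))
         = int (card (rhs_patterns n k))"
proof -
  define S where "S = {(a, d) \<in> arrowed_GT n k. no_double n d}"
  define T where "T = rhs_patterns n k"
  define f :: "(nat \<Rightarrow> nat \<Rightarrow> int) \<times> (nat \<Rightarrow> nat \<Rightarrow> dec) \<Rightarrow> int"
    where "f = (\<lambda>(a, d). (-1::int) ^ card (special_triangles n a d))"
  have memS: "(a, d) \<in> S \<longleftrightarrow> gt_pattern n k a \<and> dec_normal n d \<and> arrowed_cond n a d \<and> no_double n d" for a d
    unfolding S_def arrowed_GT_def by auto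
  have finS: "finite S"
    by (rule finite_subset[OF _ finite_S[of n k]]) (auto simp: memS)
  have TS: "T \<subseteq> S"
  proof
    fix x assume "x \<in> T"
    then obtain a d where x: "x = (a, d)" "(a, d) \<in> rhs_patterns n k" unfolding T_def by (cases x) auto
    then show "x \<in> S" using rhs_parts[OF x(2)] rhs_in_S[OF x(2)] memS by auto
  qed
  have sumT: "sum f T = int (card T)"
  proof -
    have "sum f T = sum (\<lambda>_. 1) T"
    proof (rule sum.cong)
      fix x assume "x \<in> T"
      then obtain a d where x: "x = (a, d)" "(a, d) \<in> rhs_patterns n k" unfolding T_def by (cases x) auto
      show "f x = 1" using rhs_sign[OF x(2)] x(1) unfolding f_def by simp
    qed simp
    then show ?thesis by simp
  qed
  define c where "c x = (SOME s. s \<in> sites n (fst x) (snd x))" for x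
  define \<iota> where "\<iota> x = (fst x, flip n (fst x) (snd x) (fst (c x)) (snd (c x)))" for x
  have key: "\<iota> x \<in> S - T \<and> \<iota> (\<iota> x) = x \<and> f (\<iota> x) = - f x" if xU: "x \<in> S - T" for x
  proof -
    obtain a d where x: "x = (a, d)" by (cases x)
    have g: "gt_pattern n k a" "dec_normal n d" "arrowed_cond n a d" "no_double n d" using xU x memS by auto
    have ne: "sites n a d \<noteq> {}" using no_site_rhs[OF g] xU x unfolding T_def by auto
    obtain i j where cij: "c x = (i, j)" by (cases "c x")
    have sij: "(i, j) \<in> sites n a d"
      using someI_ex[of "\<lambda>s. s \<in> sites n a d"] ne cij x unfolding c_def by auto
    have ix: "\<iota> x = (a, flip n a d i j)" unfolding \<iota>_def using x cij by simp
    have sf: "sites n a (flip n a d i j) = sites n a d" by (rule sites_flip[OF sij])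
    have c2: "c (\<iota> x) = (i, j)" using cij x ix sf unfolding c_def by simp
    have "\<iota> (\<iota> x) = (fst (\<iota> x), flip n (fst (\<iota> x)) (snd (\<iota> x)) (fst (c (\<iota> x))) (snd (c (\<iota> x))))"
      unfolding \<iota>_def[of "\<iota> x"] by simp
    also have "\<dots> = (a, flip n a (flip n a d i j) i j)" using c2 ix by simp
    also have "\<dots> = x" using flip_flip[OF sij] x by simp
    finally have ii: "\<iota> (\<iota> x) = x" .
    have inS: "\<iota> x \<in> S" using ix flip_good[OF g sij] g(1) memS by auto
    have nT: "\<iota> x \<notin> T" using site_not_rhs[OF g(1), of i j "flip n a d i j"] sij sf ix unfolding T_def by auto
    have "f (\<iota> x) = - f x" using sign_flip[OF g(1) g(3) g(4) sij] ix x unfolding f_def by simp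
    then show ?thesis using inS nT ii by blast
  qed
  have zero: "sum f (S - T) = 0"
    by (rule inv_sum_zero[of "S - T" \<iota>]) (use key in blast)+
  have "sum f S = sum f (S - T) + sum f T" by (rule sum.subset_diff[OF TS finS])
  then have "sum f S = int (card T)" using zero sumT by simp
  then show ?thesis unfolding S_def T_def f_def by simp
qed

end
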